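(* Consider the Normal Partizan Domination game on a star $K_{1,n}$ with $n\geq 1$, whose universal (center) vertex has color $C$, with $a$ leaves of color $A$ and $b=n-a$ leaves of color $B$. If $a=b$, the value is $*2$. If $|a-b|=1$, the value is $*$. If $a\geq b+2$, the value is $\uparrow^{[a-b-1]}*$. If $b\geq a+2$, the value is $\downarrow_{[b-a-1]}*$.
   Context: Normal Partizan Domination game: a finite graph $G$ has each vertex colored $A$, $B$ or $C$. Alice and Bob alternately select a vertex; Alice may only select vertices colored $A$ or $C$, Bob only vertices colored $B$ or $C$. A vertex $u$ dominates $v$ if $u=v$ or $uv$ is an edge. A vertex may be selected only if it is playable, i.e. it dominates at least one vertex not dominated by the previously selected vertices; the game ends when the selected vertices form a dominating set. Under normal play the player unable to move loses. The game is regarded as a partizan combinatorial game with Alice as Left and Bob as Right, and its value is its value in Conway's combinatorial game theory ($\{X\mid Y\}$ has Left options $X$ and Right options $Y$; $G=H$ iff $G+(-H)$ is a second-player win). Notation: $*=\{0\mid 0\}$, $*2=\{0,*\mid 0,*\}$, $\uparrow=\{0\mid *\}$, $\downarrow=\{*\mid 0\}$; $\uparrow^{[1]}=\uparrow$, $\uparrow^{[m]}=\{\uparrow^{[m-1]}\mid *\}$ for $m\geq 2$; $\downarrow_{[1]}=\downarrow$, $\downarrow_{[m]}=\{*\mid \downarrow_{[m-1]}\}$ for $m\geq 2$; $J*$ denotes $J+*$. *)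

theory Defs
  imports Main
begin

datatype game = Game "game list" "game list"

fun neg :: "game \<Rightarrow> game" where
  "neg (Game L R) = Game (map neg R) (map neg L)"

lemma size_mem_list: "x \<in> set xs \<Longrightarrow> size x < Suc (size_list size xs)"
  by (induction xs) auto

function gplus :: "game \<Rightarrow> game \<Rightarrow> game" where
  "gplus (Game GL GR) (Game HL HR) =
     Game (map (\<lambda>x. gplus x (Game HL HR)) GL @ map (\<lambda>y. gplus (Game GL GR) y) HL)
          (map (\<lambda>x. gplus x (Game HL HR)) GR @ map (\<lambda>y. gplus (Game GL GR) y) HR)"
  by pat_completeness auto
termination
  by (relation "measure (\<lambda>(g,h). size g + size h)")
     (auto dest!: size_mem_list)

text \<open>\<open>wins True G\<close>: Left, moving first in G, wins under normal play;
  \<open>wins False G\<close>: Right, moving first in G, wins under normal play.\<close>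
function wins :: "bool \<Rightarrow> game \<Rightarrow> bool" where
  "wins True (Game L R) = (\<exists>g\<in>set L. \<not> wins False g)"
| "wins False (Game L R) = (\<exists>g\<in>set R. \<not> wins True g)"
  by pat_completeness auto
termination
  by (relation "measure (\<lambda>(p,g). size g)") (auto dest!: size_mem_list)

definition second_player_win :: "game \<Rightarrow> bool" where
  "second_player_win G \<longleftrightarrow> \<not> wins True G \<and> \<not> wins False G"

definition game_eq :: "game \<Rightarrow> game \<Rightarrow> bool" where
  "game_eq G H \<longleftrightarrow> second_player_win (gplus G (neg H))"

definition zero_g :: game where "zero_g = Game [] []"
definition star_g :: game where "star_g = Game [zero_g] [zero_g]"
definition star2_g :: game where "star2_g = Game [zero_g, star_g] [zero_g, star_g]"
definition up_g :: game where "up_g = Game [zero_g] [star_g]"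
definition down_g :: game where "down_g = Game [star_g] [zero_g]"

text \<open>\<open>upm m\<close> = up^[m], \<open>downm m\<close> = down_[m], meaningful for m \<ge> 1.\<close>
fun upm :: "nat \<Rightarrow> game" where
  "upm 0 = zero_g"
| "upm (Suc 0) = up_g"
| "upm (Suc (Suc k)) = Game [upm (Suc k)] [star_g]"

fun downm :: "nat \<Rightarrow> game" where
  "downm 0 = zero_g"
| "downm (Suc 0) = down_g"
| "downm (Suc (Suc k)) = Game [star_g] [downm (Suc k)]"

datatype color = A | B | C

text \<open>Graph on vertex set {0..<n} with adjacency relation E (symmetric, irreflexive).
  Closed neighbourhood: vertices dominated by v.\<close>
definition closed_nb :: "nat \<Rightarrow> (nat \<Rightarrow> nat \<Rightarrow> bool) \<Rightarrow> nat \<Rightarrow> nat set" where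
  "closed_nb n E v = {u. u < n \<and> (u = v \<or> E v u)}"

definition playable :: "nat \<Rightarrow> (nat \<Rightarrow> nat \<Rightarrow> bool) \<Rightarrow> nat set \<Rightarrow> nat \<Rightarrow> bool" where
  "playable n E D v \<longleftrightarrow> v < n \<and> \<not> closed_nb n E v \<subseteq> D"

definition left_moves :: "nat \<Rightarrow> (nat \<Rightarrow> nat \<Rightarrow> bool) \<Rightarrow> (nat \<Rightarrow> color) \<Rightarrow> nat set \<Rightarrow> nat list" where
  "left_moves n E col D = filter (\<lambda>v. (col v = A \<or> col v = C) \<and> playable n E D v) [0..<n]"

definition right_moves :: "nat \<Rightarrow> (nat \<Rightarrow> nat \<Rightarrow> bool) \<Rightarrow> (nat \<Rightarrow> color) \<Rightarrow> nat set \<Rightarrow> nat list" where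
  "right_moves n E col D = filter (\<lambda>v. (col v = B \<or> col v = C) \<and> playable n E D v) [0..<n]"

lemma dgame_term_aux:
  assumes "playable n E D v"
  shows "card ({..<n} - (D \<union> closed_nb n E v)) < card ({..<n} - D)"
proof -
  from assms obtain u where u: "u \<in> closed_nb n E v" "u \<notin> D"
    unfolding playable_def by auto
  hence "u < n" unfolding closed_nb_def by auto
  have sub: "{..<n} - (D \<union> closed_nb n E v) \<subset> {..<n} - D"
    using u \<open>u < n\<close> by auto
  show ?thesis by (rule psubset_card_mono) (use sub in auto)
qed

text \<open>Game value of the position in which the set D of vertices is already dominated.\<close>
function dgame :: "nat \<Rightarrow> (nat \<Rightarrow> nat \<Rightarrow> bool) \<Rightarrow> (nat \<Rightarrow> color) \<Rightarrow> nat set \<Rightarrow> game" where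
  "dgame n E col D =
     Game (map (\<lambda>v. dgame n E col (D \<union> closed_nb n E v)) (left_moves n E col D))
          (map (\<lambda>v. dgame n E col (D \<union> closed_nb n E v)) (right_moves n E col D))"
  by pat_completeness auto
termination
  by (relation "measure (\<lambda>(n,E,col,D). card ({..<n} - D))")
     (auto simp: left_moves_def right_moves_def intro: dgame_term_aux)

definition domination_game :: "nat \<Rightarrow> (nat \<Rightarrow> nat \<Rightarrow> bool) \<Rightarrow> (nat \<Rightarrow> color) \<Rightarrow> game" where
  "domination_game n E col = dgame n E col {}"

text \<open>Star K_{1,m}: vertices 0..m, centre 0, leaves 1..m.\<close>
definition star_edge :: "nat \<Rightarrow> nat \<Rightarrow> nat \<Rightarrow> bool" where
  "star_edge m u v \<longleftrightarrow> (u = 0 \<and> 1 \<le> v \<and> v \<le> m) \<or> (v = 0 \<and> 1 \<le> u \<and> u \<le> m)"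

end

theory Submission
  imports Defs
begin


lemma neg_neg[simp]: "neg (neg G) = G"
  by (induction G) (auto simp: map_idI)

lemma neg_gplus: "neg (gplus G H) = gplus (neg G) (neg H)"
  by (induction G H rule: gplus.induct) auto

lemma wins_neg: "wins p (neg G) = wins (\<not>p) G"
  by (induction G arbitrary: p) (case_tac p; auto)

lemma wins_comm: "wins p (gplus G H) = wins p (gplus H G)"
proof (induction "size G + size H" arbitrary: G H p rule: less_induct)
  case less
  obtain GL GR where G: "G = Game GL GR" by (cases G)
  obtain HL HR where H: "H = Game HL HR" by (cases H)
  have sG: "\<And>x. x \<in> set GL \<union> set GR \<Longrightarrow> size x < size G"
    using G size_mem_list by fastforce
  have sH: "\<And>x. x \<in> set HL \<union> set HR \<Longrightarrow> size x < size H"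
    using H size_mem_list by fastforce
  have IH1: "\<And>x q. x \<in> set GL \<union> set GR \<Longrightarrow> wins q (gplus x H) = wins q (gplus H x)"
    using less sG by force
  have IH2: "\<And>x q. x \<in> set HL \<union> set HR \<Longrightarrow> wins q (gplus G x) = wins q (gplus x G)"
    using less sH by force
  have "wins True (gplus G H) = wins True (gplus H G)"
    using IH1 IH2 unfolding G H by (simp add: bex_Un) metis
  moreover have "wins False (gplus G H) = wins False (gplus H G)"
    using IH1 IH2 unfolding G H by (simp add: bex_Un) metis
  ultimately show ?case by (cases p) auto
qed

definition ge :: "game \<Rightarrow> game \<Rightarrow> bool" where
  "ge G H \<longleftrightarrow> \<not> wins False (gplus G (neg H))"

lemma wins_True_diff: "wins True (gplus X (neg Y)) = (\<not> ge Y X)"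
proof -
  have "wins True (gplus X (neg Y)) = wins False (neg (gplus X (neg Y)))"
    by (simp add: wins_neg)
  also have "\<dots> = wins False (gplus (neg X) Y)" by (simp add: neg_gplus)
  also have "\<dots> = wins False (gplus Y (neg X))" by (rule wins_comm)
  finally show ?thesis by (simp add: ge_def)
qed

lemma ge_char: "ge (Game GL GR) (Game HL HR) \<longleftrightarrow>
   (\<forall>gr\<in>set GR. \<not> ge (Game HL HR) gr) \<and> (\<forall>hl\<in>set HL. \<not> ge hl (Game GL GR))"
proof -
  have "ge (Game GL GR) (Game HL HR) \<longleftrightarrow>
     (\<forall>gr\<in>set GR. wins True (gplus gr (neg (Game HL HR)))) \<and>
     (\<forall>hl\<in>set HL. wins True (gplus (Game GL GR) (neg hl)))"
    by (simp add: ge_def ball_Un)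
  then show ?thesis using wins_True_diff[of _ "Game HL HR"] by (simp add: wins_True_diff)
qed

lemma game_eq_ge: "game_eq G H \<longleftrightarrow> ge G H \<and> ge H G"
  unfolding game_eq_def second_player_win_def
  by (simp add: wins_True_diff) (auto simp add: ge_def)

lemma ge_optR: "gr \<in> set GR \<Longrightarrow> ge gr gr \<Longrightarrow> \<not> ge (Game GL GR) gr"
  by (cases gr) (metis ge_char)

lemma ge_optL: "gl \<in> set GL \<Longrightarrow> ge gl gl \<Longrightarrow> \<not> ge gl (Game GL GR)"
  by (cases gl) (metis ge_char)

lemma ge_refl[simp]: "ge G G"
proof (induction G)
  case (Game L R)
  then show ?case by (auto simp: ge_char ge_optR ge_optL)
qed

lemma ge_optR'[simp]: "gr \<in> set GR \<Longrightarrow> \<not> ge (Game GL GR) gr"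
  by (simp add: ge_optR)

lemma ge_optL'[simp]: "gl \<in> set GL \<Longrightarrow> \<not> ge gl (Game GL GR)"
  by (simp add: ge_optL)

lemma ge_trans: "ge G H \<Longrightarrow> ge H K \<Longrightarrow> ge G K"
proof (induction "size G + size H + size K" arbitrary: G H K rule: less_induct)
  case less
  obtain GL GR where G: "G = Game GL GR" by (cases G)
  obtain KL KR where K: "K = Game KL KR" by (cases K)
  obtain HL HR where H: "H = Game HL HR" by (cases H)
  have 1: "\<not> ge K gr" if gr: "gr \<in> set GR" for gr
  proof
    assume a: "ge K gr"
    have "size gr < size G" using G gr size_mem_list by fastforce
    hence "ge H gr" using less(1)[of H K gr] less(3) a by simp
    moreover have "\<not> ge H gr" using less(2) gr unfolding G H by (simp add: ge_char)
    ultimately show False by simp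
  qed
  have 2: "\<not> ge kl G" if kl: "kl \<in> set KL" for kl
  proof
    assume a: "ge kl G"
    have "size kl < size K" using K kl size_mem_list by fastforce
    hence "ge kl H" using less(1)[of kl G H] less(2) a by simp
    moreover have "\<not> ge kl H" using less(3) kl unfolding K H by (simp add: ge_char)
    ultimately show False by simp
  qed
  show ?case using 1 2 unfolding G K by (simp add: ge_char)
qed

lemma game_eq_refl[simp]: "game_eq G G" by (simp add: game_eq_ge)
lemma game_eq_sym: "game_eq G H \<Longrightarrow> game_eq H G" by (auto simp: game_eq_ge)
lemma game_eq_trans: "game_eq G H \<Longrightarrow> game_eq H K \<Longrightarrow> game_eq G K"
  by (auto simp: game_eq_ge intro: ge_trans)

lemma ge_neg: "ge (neg G) (neg H) = ge H G"
  unfolding ge_def using wins_comm by simp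

lemma game_eq_neg: "game_eq G H \<Longrightarrow> game_eq (neg G) (neg H)"
  by (auto simp: game_eq_ge ge_neg)

lemma gift_horse:
  assumes "set L \<subseteq> set L'" "set R \<subseteq> set R'"
    and "\<forall>x\<in>set L'. x \<in> set L \<or> \<not> ge x (Game L R)"
    and "\<forall>y\<in>set R'. y \<in> set R \<or> \<not> ge (Game L R) y"
  shows "game_eq (Game L' R') (Game L R)"
proof -
  have "ge (Game L' R') (Game L R)"
    unfolding ge_char using assms by auto
  moreover have "ge (Game L R) (Game L' R')"
    unfolding ge_char using assms by auto
  ultimately show ?thesis by (simp add: game_eq_ge)
qed

lemma replacement:
  assumes "\<forall>x\<in>set L. \<exists>y\<in>set L'. game_eq x y" "\<forall>y\<in>set L'. \<exists>x\<in>set L. game_eq x y"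
    and "\<forall>x\<in>set R. \<exists>y\<in>set R'. game_eq x y" "\<forall>y\<in>set R'. \<exists>x\<in>set R. game_eq x y"
  shows "game_eq (Game L R) (Game L' R')"
proof -
  have "ge (Game L R) (Game L' R')"
    unfolding ge_char
  proof safe
    fix gr assume gr: "gr \<in> set R" and a: "ge (Game L' R') gr"
    obtain y where y: "y \<in> set R'" "game_eq gr y" using assms(3) gr by blast
    have "ge (Game L' R') y" using a y(2) by (auto simp: game_eq_ge intro: ge_trans)
    thus False using y(1) by simp
  next
    fix hl assume hl: "hl \<in> set L'" and a: "ge hl (Game L R)"
    obtain x where x: "x \<in> set L" "game_eq x hl" using assms(2) hl by blast
    have "ge x (Game L R)" using a x(2) by (auto simp: game_eq_ge intro: ge_trans)
    thus False using x(1) by simp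
  qed
  moreover have "ge (Game L' R') (Game L R)"
    unfolding ge_char
  proof safe
    fix gr assume gr: "gr \<in> set R'" and a: "ge (Game L R) gr"
    obtain y where y: "y \<in> set R" "game_eq y gr" using assms(4) gr by blast
    have "ge (Game L R) y" using a y(2) by (auto simp: game_eq_ge intro: ge_trans)
    thus False using y(1) by simp
  next
    fix hl assume hl: "hl \<in> set L" and a: "ge hl (Game L' R')"
    obtain x where x: "x \<in> set L'" "game_eq hl x" using assms(1) hl by blast
    have "ge x (Game L' R')" using a x(2) by (auto simp: game_eq_ge intro: ge_trans)
    thus False using x(1) by simp
  qed
  ultimately show ?thesis by (simp add: game_eq_ge)
qed

fun W :: "nat \<Rightarrow> game" where
  "W 0 = star_g"
| "W (Suc k) = Game [zero_g, W k] [zero_g]"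

lemma upm_Suc: "upm (Suc k) = Game [upm k] [star_g]"
  by (cases k) (simp_all add: up_g_def)

lemma neg_upm: "neg (upm k) = downm k"
  by (induction k rule: upm.induct) (simp_all add: up_g_def down_g_def star_g_def zero_g_def)

lemma gplus_zero_right[simp]: "gplus G zero_g = G"
  by (induction G) (simp_all add: zero_g_def map_idI)

lemma gplus_zero_left[simp]: "gplus zero_g G = G"
  by (induction G) (simp_all add: zero_g_def map_idI)

lemma ge_upm_zero: "ge (upm k) zero_g"
  by (cases k) (simp_all add: upm_Suc ge_char zero_g_def star_g_def)

lemma star_star: "game_eq (gplus star_g star_g) zero_g"
  by (simp add: game_eq_ge ge_char star_g_def zero_g_def)

lemma upm_W: "game_eq (gplus (upm k) star_g) (W k)"
proof (induction k)
  case 0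
  then show ?case by simp
next
  case (Suc k)
  define U where "U = upm (Suc k)"
  have eq: "gplus U star_g = Game [gplus (upm k) star_g, gplus U zero_g] [gplus star_g star_g, gplus U zero_g]"
    unfolding U_def by (simp add: upm_Suc star_g_def)
  have U0: "ge U zero_g" unfolding U_def by (rule ge_upm_zero)
  have 1: "game_eq (gplus U star_g) (Game [W k, U] [zero_g, U])"
    unfolding eq using Suc star_star by (intro replacement) auto
  have 2: "game_eq (Game [zero_g, W k, U] [zero_g, U]) (Game [W k, U] [zero_g, U])"
    apply (rule gift_horse)
    using U0 by (auto simp: ge_char zero_g_def)
  have WS: "ge (W (Suc k)) star_g"
    by (simp add: ge_char star_g_def zero_g_def)
  have 3: "game_eq (Game [zero_g, W k, U] [zero_g, U]) (W (Suc k))"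
    unfolding W.simps
    apply (rule gift_horse)
    using U0 WS unfolding U_def upm_Suc by (auto simp: ge_char zero_g_def)
  show ?case
    using 1 2 3 unfolding U_def[symmetric] by (meson game_eq_sym game_eq_trans)
qed


definition V :: "int \<Rightarrow> game" where
  "V d = (if d = 0 then star2_g else if d > 0 then W (nat d - 1) else neg (W (nat (-d) - 1)))"

definition T :: "nat \<Rightarrow> nat \<Rightarrow> game" where
  "T p q = (if p = 0 \<and> q = 0 then zero_g else V (int p - int q))"

lemma neg_star[simp]: "neg star_g = star_g"
  by (simp add: star_g_def zero_g_def)

lemma neg_zero[simp]: "neg zero_g = zero_g"
  by (simp add: zero_g_def)

lemma neg_star2[simp]: "neg star2_g = star2_g"
  by (simp add: star2_g_def)

lemma T_sym: "T q p = neg (T p q)"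
  by (simp add: T_def V_def)

lemma T_pos: "T (q + k + 1) q = W k"
proof -
  have "nat (1 + int k) = Suc k" by simp
  then show ?thesis by (simp add: T_def V_def)
qed

lemma T_diag: "0 < p \<Longrightarrow> T p p = star2_g"
  by (simp add: T_def V_def)

lemma T_00: "T 0 0 = zero_g"
  by (simp add: T_def)

definition LT :: "nat \<Rightarrow> nat \<Rightarrow> game" where
  "LT p q = Game (zero_g # (if 0 < p then [T (p-1) q] else []))
                 (zero_g # (if 0 < q then [T p (q-1)] else []))"

lemma LT_sym: "LT q p = neg (LT p q)"
  unfolding LT_def using T_sym[of "q-1" p] T_sym[of q "p-1"] T_sym[of "q-1" 0] T_sym[of 0 "p-1"] by simp

lemma Id_ge:
  assumes "q \<le> p" "0 < p"
  shows "game_eq (LT p q) (T p q)"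
proof (cases "q = 0")
  case True
  show ?thesis
  proof (cases "p = 1")
    case True
    have "game_eq (Game [zero_g, zero_g] [zero_g]) (Game [zero_g] [zero_g])"
      by (rule replacement) auto
    moreover have "LT p q = Game [zero_g, zero_g] [zero_g]" 
      using \<open>q = 0\<close> True by (simp add: LT_def T_00)
    moreover have "T p q = Game [zero_g] [zero_g]"
      using \<open>q = 0\<close> True T_pos[of 0 0] by (simp add: star_g_def)
    ultimately show ?thesis by simp
  next
    case False
    then obtain k where k: "p = Suc (Suc k)" using assms(2)
      by (metis One_nat_def Suc_pred not0_implies_Suc)
    have "LT p q = Game [zero_g, W k] [zero_g]"
      using \<open>q = 0\<close> k T_pos[of 0 k] by (simp add: LT_def)
    moreover have "T p q = W (Suc k)"
      using \<open>q = 0\<close> k T_pos[of 0 "Suc k"] by simp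
    ultimately show ?thesis by simp
  qed
next
  case False
  then have q0: "0 < q" by simp
  obtain j where j: "p = q + j" using assms(1) le_Suc_ex by blast
  consider "j = 0" | "j = 1" | k where "j = k + 2"
    by (metis add_2_eq_Suc' not0_implies_Suc One_nat_def)
  then show ?thesis
  proof cases
    case 1
    have "T (p - 1) q = star_g" using 1 j q0 T_sym[of "q-1" q] T_pos[of "q-1" 0] by simp
    moreover have "T p (q - 1) = star_g" using 1 j q0 T_pos[of "q-1" 0] by simp
    ultimately show ?thesis using 1 j q0 by (simp add: LT_def T_diag star2_g_def)
  next
    case 2
    have e: "LT p q = Game [zero_g, star2_g] [zero_g, W 1]"
      using 2 j q0 T_pos[of "q-1" 1] by (simp add: LT_def T_diag)
    have "game_eq (Game [zero_g, star2_g] [zero_g, W 1]) (Game [zero_g] [zero_g])"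
      by (rule gift_horse) (auto simp: ge_char star2_g_def star_g_def zero_g_def)
    moreover have "T p q = Game [zero_g] [zero_g]" 
      using 2 j T_pos[of q 0] by (simp add: star_g_def)
    ultimately show ?thesis using e by simp
  next
    case 3
    have e: "LT p q = Game [zero_g, W k] [zero_g, W (Suc (Suc k))]"
      using 3 j q0 T_pos[of q k] T_pos[of "q-1" "Suc (Suc k)"] by (simp add: LT_def)
    have "game_eq (Game [zero_g, W k] [zero_g, W (Suc (Suc k))]) (Game [zero_g, W k] [zero_g])"
      by (rule gift_horse) (auto simp: ge_char zero_g_def)
    moreover have "T p q = W (Suc k)" using 3 j T_pos[of q "Suc k"] by simp
    ultimately show ?thesis using e by simp
  qed
qed

lemma Id:
  assumes "0 < p + q"
  shows "game_eq (LT p q) (T p q)"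
proof (cases "q \<le> p")
  case True
  then show ?thesis using assms Id_ge[of q p] by auto
next
  case False
  then have "game_eq (LT q p) (T q p)" using Id_ge by simp
  then have "game_eq (neg (LT q p)) (neg (T q p))" by (rule game_eq_neg)
  then show ?thesis by (simp add: LT_sym[of q p] T_sym[of q p])
qed


declare dgame.simps[simp del]

lemma closed_nb_sub: "closed_nb N E v \<subseteq> {..<N}"
  by (auto simp: closed_nb_def)

lemma dgame_full: "dgame N E col {..<N} = zero_g"
proof -
  have "left_moves N E col {..<N} = []" "right_moves N E col {..<N} = []"
    using closed_nb_sub by (auto simp: left_moves_def right_moves_def playable_def filter_empty_conv)
  then show ?thesis by (subst dgame.simps) (simp add: zero_g_def)
qed

lemma cnb0: "closed_nb (Suc n) (star_edge n) 0 = {..<Suc n}"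
  by (auto simp: closed_nb_def star_edge_def)

lemma cnbi: "1 \<le> i \<Longrightarrow> i \<le> n \<Longrightarrow> closed_nb (Suc n) (star_edge n) i = {0, i}"
  by (auto simp: closed_nb_def star_edge_def)

definition UD :: "nat \<Rightarrow> nat set \<Rightarrow> nat set" where
  "UD n D = {i. 1 \<le> i \<and> i \<le> n \<and> i \<notin> D}"

definition cnt :: "nat \<Rightarrow> (nat \<Rightarrow> color) \<Rightarrow> color \<Rightarrow> nat set \<Rightarrow> nat" where
  "cnt n col X D = card {i \<in> UD n D. col i = X}"

lemma finite_UD[simp]: "finite (UD n D)"
  by (rule finite_subset[of _ "{..n}"]) (auto simp: UD_def)

lemma cnt_step_same:
  assumes "1 \<le> v" "v \<le> n" "v \<notin> D" "col v = X"
  shows "cnt n col X (D \<union> {0, v}) = cnt n col X D - 1"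
proof -
  have "{i \<in> UD n (D \<union> {0, v}). col i = X} = {i \<in> UD n D. col i = X} - {v}"
    using assms by (auto simp: UD_def)
  moreover have "v \<in> {i \<in> UD n D. col i = X}" using assms by (auto simp: UD_def)
  ultimately show ?thesis unfolding cnt_def by simp
qed

lemma cnt_step_other:
  assumes "col v \<noteq> Y"
  shows "cnt n col Y (D \<union> {0, v}) = cnt n col Y D"
proof -
  have "{i \<in> UD n (D \<union> {0, v}). col i = Y} = {i \<in> UD n D. col i = Y}"
    using assms by (auto simp: UD_def)
  then show ?thesis unfolding cnt_def by simp
qed

lemma UD_step: "v \<in> UD n D \<Longrightarrow> card (UD n (D \<union> {0, v})) < card (UD n D)"
  by (rule psubset_card_mono) (auto simp: UD_def)

lemma cnt_pos: "v \<in> UD n D \<Longrightarrow> col v = X \<Longrightarrow> 0 < cnt n col X D"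
  unfolding cnt_def by (subst card_gt_0_iff) auto

lemma cnt_pos_ex: "0 < cnt n col X D \<Longrightarrow> \<exists>v\<in>UD n D. col v = X"
  unfolding cnt_def by (metis (mono_tags, lifting) card.empty empty_Collect_eq less_irrefl mem_Collect_eq)

context
  fixes n :: nat and col :: "nat \<Rightarrow> color"
  assumes col0: "col 0 = C" and leaves: "\<forall>i\<in>{1..n}. col i = A \<or> col i = B"
begin

lemma UD_empty_iff: "UD n D = {} \<longleftrightarrow> cnt n col A D + cnt n col B D = 0"
proof
  assume "UD n D = {}" then show "cnt n col A D + cnt n col B D = 0" by (simp add: cnt_def)
next
  assume a: "cnt n col A D + cnt n col B D = 0"
  show "UD n D = {}"
  proof (rule ccontr)
    assume "UD n D \<noteq> {}"
    then obtain v where v: "v \<in> UD n D" by blast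
    then have "col v = A \<or> col v = B" using leaves by (auto simp: UD_def)
    then show False using cnt_pos[OF v, of col] a by auto
  qed
qed

lemma play0:
  assumes "D \<subseteq> {..<n+1}" "D = {} \<Longrightarrow> 0 < n" "D = {} \<or> 0 \<in> D"
  shows "playable (n+1) (star_edge n) D 0 \<longleftrightarrow> UD n D \<noteq> {}"
proof
  assume "playable (n+1) (star_edge n) D 0"
  then have "\<not> {..<Suc n} \<subseteq> D" by (simp add: playable_def cnb0)
  then obtain u where "u < Suc n" "u \<notin> D" by blast
  then have u: "u \<le> n" "u \<notin> D" by auto
  show "UD n D \<noteq> {}"
  proof (cases "u = 0")
    case True
    then have "D = {}" using assms(3) u by auto
    then have "1 \<in> UD n D" using assms(2) by (auto simp: UD_def)
    then show ?thesis by blast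
  next
    case False
    then have "u \<in> UD n D" using u by (auto simp: UD_def)
    then show ?thesis by blast
  qed
next
  assume "UD n D \<noteq> {}"
  then obtain u where "u \<in> UD n D" by blast
  then have "u < Suc n" "u \<notin> D" by (auto simp: UD_def)
  then have "\<not> {..<Suc n} \<subseteq> D" by blast
  then show "playable (n+1) (star_edge n) D 0"
    by (simp add: playable_def cnb0)
qed

lemma playi:
  assumes "D = {} \<or> 0 \<in> D" "1 \<le> i" "i \<le> n"
  shows "playable (n+1) (star_edge n) D i \<longleftrightarrow> i \<notin> D"
  using assms by (auto simp: playable_def cnbi)

lemma main:
  "D \<subseteq> {..<n+1} \<Longrightarrow> (D = {} \<Longrightarrow> 0 < n) \<Longrightarrow> (D = {} \<or> 0 \<in> D) \<Longrightarrow>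
   game_eq (dgame (n+1) (star_edge n) col D) (T (cnt n col A D) (cnt n col B D))"
proof (induction "card (UD n D)" arbitrary: D rule: less_induct)
  case less
  let ?N = "n+1" and ?E = "star_edge n"
  let ?f = "\<lambda>v. dgame ?N ?E col (D \<union> closed_nb ?N ?E v)"
  let ?p = "cnt n col A D" and ?q = "cnt n col B D"
  show ?case
  proof (cases "UD n D = {}")
    case True
    then have D: "D = {..<n+1}"
      using less.prems by (auto simp: UD_def) (metis One_nat_def Suc_leI Suc_le_eq less_Suc_eq_le not_gr_zero)
    have "?p = 0" "?q = 0" using True by (auto simp: cnt_def)
    then show ?thesis using D by (simp add: dgame_full T_00)
  next
    case False
    then have pq: "0 < ?p + ?q" using UD_empty_iff by simp
    have f0: "?f 0 = zero_g"
      using less.prems(1) by (simp add: cnb0 Un_absorb1 dgame_full)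
    have p0: "playable ?N ?E D 0" using play0[OF less.prems] False by simp
    have IHv: "game_eq (?f v) (T (cnt n col A (D \<union> {0,v})) (cnt n col B (D \<union> {0,v})))"
      if v: "v \<in> UD n D" for v
    proof -
      have v1: "1 \<le> v" "v \<le> n" "v \<notin> D" using v by (auto simp: UD_def)
      have "game_eq (dgame ?N ?E col (D \<union> {0,v})) (T (cnt n col A (D \<union> {0,v})) (cnt n col B (D \<union> {0,v})))"
        using less.hyps[OF UD_step[OF v]] less.prems v1 by auto
      then show ?thesis using v1 by (simp add: cnbi)
    qed
    have IHA: "game_eq (?f v) (T (?p - 1) ?q)" if v: "v \<in> UD n D" "col v = A" for v
      using IHv[OF v(1)] cnt_step_same[of v n D col A] cnt_step_other[of col v B n D] v
      by (auto simp: UD_def)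
    have IHB: "game_eq (?f v) (T ?p (?q - 1))" if v: "v \<in> UD n D" "col v = B" for v
      using IHv[OF v(1)] cnt_step_same[of v n D col B] cnt_step_other[of col v A n D] v
      by (auto simp: UD_def)
    have lm: "set (left_moves ?N ?E col D) = {v. v < ?N \<and> (col v = A \<or> col v = C) \<and> playable ?N ?E D v}"
      unfolding left_moves_def by (auto simp del: upt_Suc)
    have rm: "set (right_moves ?N ?E col D) = {v. v < ?N \<and> (col v = B \<or> col v = C) \<and> playable ?N ?E D v}"
      unfolding right_moves_def by (auto simp del: upt_Suc)
    have leafplay: "v \<in> UD n D" if "v < ?N" "v \<noteq> 0" "playable ?N ?E D v" for v
      using that playi[OF less.prems(3), of v] by (auto simp: UD_def)
    have leafcol: "col v \<noteq> C" if "v \<in> UD n D" for v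
      using that leaves by (force simp: UD_def)
    have "game_eq (dgame ?N ?E col D) (LT ?p ?q)"
      unfolding LT_def
    proof (subst dgame.simps, rule replacement)
      show "\<forall>x\<in>set (map ?f (left_moves ?N ?E col D)). \<exists>y\<in>set (zero_g # (if 0 < ?p then [T (?p - 1) ?q] else [])). game_eq x y"
      proof
        fix x assume "x \<in> set (map ?f (left_moves ?N ?E col D))"
        then obtain v where v0: "v \<in> set (left_moves ?N ?E col D)" "x = ?f v" by auto
        then have v: "v < ?N" "col v = A \<or> col v = C" "playable ?N ?E D v" "x = ?f v"
          using lm by auto
        show "\<exists>y\<in>set (zero_g # (if 0 < ?p then [T (?p - 1) ?q] else [])). game_eq x y"
        proof (cases "v = 0")
          case True then show ?thesis using v f0 by simp
        next
          case False
          then have u: "v \<in> UD n D" using leafplay v by simp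
          then have "col v = A" using leafcol v by auto
          then show ?thesis using IHA[OF u] cnt_pos[OF u, of col A] v by auto
        qed
      qed
    next
      show "\<forall>y\<in>set (zero_g # (if 0 < ?p then [T (?p - 1) ?q] else [])). \<exists>x\<in>set (map ?f (left_moves ?N ?E col D)). game_eq x y"
      proof
        fix y assume y: "y \<in> set (zero_g # (if 0 < ?p then [T (?p - 1) ?q] else []))"
        show "\<exists>x\<in>set (map ?f (left_moves ?N ?E col D)). game_eq x y"
        proof (cases "y = zero_g")
          case True
          have "0 \<in> set (left_moves ?N ?E col D)" unfolding lm using p0 col0 by auto
          then show ?thesis using True f0 by force
        next
          case False
          then have y': "y = T (?p - 1) ?q" "0 < ?p" using y by (auto split: if_splits)
          then obtain v where v: "v \<in> UD n D" "col v = A" using cnt_pos_ex by blast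
          have "v \<in> set (left_moves ?N ?E col D)" unfolding lm
            using v playi[OF less.prems(3), of v] by (auto simp: UD_def)
          then show ?thesis using IHA[OF v] y' by force
        qed
      qed
    next
      show "\<forall>x\<in>set (map ?f (right_moves ?N ?E col D)). \<exists>y\<in>set (zero_g # (if 0 < ?q then [T ?p (?q - 1)] else [])). game_eq x y"
      proof
        fix x assume "x \<in> set (map ?f (right_moves ?N ?E col D))"
        then obtain v where v0: "v \<in> set (right_moves ?N ?E col D)" "x = ?f v" by auto
        then have v: "v < ?N" "col v = B \<or> col v = C" "playable ?N ?E D v" "x = ?f v"
          using rm by auto
        show "\<exists>y\<in>set (zero_g # (if 0 < ?q then [T ?p (?q - 1)] else [])). game_eq x y"
        proof (cases "v = 0")
          case True then show ?thesis using v f0 by simp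
        next
          case False
          then have u: "v \<in> UD n D" using leafplay v by simp
          then have "col v = B" using leafcol v by auto
          then show ?thesis using IHB[OF u] cnt_pos[OF u, of col B] v by auto
        qed
      qed
    next
      show "\<forall>y\<in>set (zero_g # (if 0 < ?q then [T ?p (?q - 1)] else [])). \<exists>x\<in>set (map ?f (right_moves ?N ?E col D)). game_eq x y"
      proof
        fix y assume y: "y \<in> set (zero_g # (if 0 < ?q then [T ?p (?q - 1)] else []))"
        show "\<exists>x\<in>set (map ?f (right_moves ?N ?E col D)). game_eq x y"
        proof (cases "y = zero_g")
          case True
          have "0 \<in> set (right_moves ?N ?E col D)" unfolding rm using p0 col0 by auto
          then show ?thesis using True f0 by force
        next
          case False
          then have y': "y = T ?p (?q - 1)" "0 < ?q" using y by (auto split: if_splits)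
          then obtain v where v: "v \<in> UD n D" "col v = B" using cnt_pos_ex by blast
          have "v \<in> set (right_moves ?N ?E col D)" unfolding rm
            using v playi[OF less.prems(3), of v] by (auto simp: UD_def)
          then show ?thesis using IHB[OF v] y' by force
        qed
      qed
    qed
    then show ?thesis using Id[OF pq] game_eq_trans by blast
  qed
qed

end


theorem theorem7:
  fixes n a b :: nat and col :: "nat \<Rightarrow> color"
  assumes "n \<ge> 1"
    and "col 0 = C"
    and "\<forall>i\<in>{1..n}. col i = A \<or> col i = B"
    and "a = card {i\<in>{1..n}. col i = A}"
    and "b = n - a"
  shows "(a = b \<longrightarrow> game_eq (domination_game (n+1) (star_edge n) col) star2_g)
       \<and> ((a = b + 1 \<or> b = a + 1) \<longrightarrow> game_eq (domination_game (n+1) (star_edge n) col) star_g)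
       \<and> (a \<ge> b + 2 \<longrightarrow> game_eq (domination_game (n+1) (star_edge n) col) (gplus (upm (a - b - 1)) star_g))
       \<and> (b \<ge> a + 2 \<longrightarrow> game_eq (domination_game (n+1) (star_edge n) col) (gplus (downm (b - a - 1)) star_g))"
proof -
  let ?G = "domination_game (n+1) (star_edge n) col"
  have U: "UD n {} = {1..n}" by (auto simp: UD_def)
  have ca: "cnt n col A {} = a" using assms(4) U by (simp add: cnt_def)
  have part: "{1..n} = {i\<in>{1..n}. col i = A} \<union> {i\<in>{1..n}. col i = B}"
    using assms(3) by auto
  have "card {1..n} = card {i\<in>{1..n}. col i = A} + card {i\<in>{1..n}. col i = B}"
    by (subst part, rule card_Un_disjoint) auto
  then have cb: "cnt n col B {} = b" using assms(4,5) U by (simp add: cnt_def)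
  have main0: "game_eq ?G (T a b)"
    using main[OF assms(2,3), of "{}"] assms(1) ca cb by (simp add: domination_game_def)
  have "card {i\<in>{1..n}. col i = A} \<le> card {1..n}" by (rule card_mono) auto
  then have "a \<le> n" using assms(4) by simp
  then have ab: "a + b = n" by (simp add: assms(5))
  have c1: "game_eq ?G star2_g" if "a = b"
    using main0 that ab assms(1) T_diag[of b] by simp
  have c2: "game_eq ?G star_g" if "a = b + 1 \<or> b = a + 1"
    using that
  proof
    assume "a = b + 1" then show ?thesis using main0 T_pos[of b 0] by simp
  next
    assume "b = a + 1" then show ?thesis using main0 T_pos[of a 0] T_sym[of a b] by simp
  qed
  have c3: "game_eq ?G (gplus (upm (a - b - 1)) star_g)" if "a \<ge> b + 2"
  proof -
    define k where "k = a - b - 2"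
    have k: "a = b + k + 2" using that k_def by simp
    have e: "a - b - 1 = Suc k" using k by simp
    have "T a b = W (Suc k)" using k T_pos[of b "Suc k"] by simp
    then have g1: "game_eq ?G (W (Suc k))" using main0 by simp
    have g2: "game_eq (W (Suc k)) (gplus (upm (Suc k)) star_g)" by (rule game_eq_sym[OF upm_W])
    show ?thesis unfolding e by (rule game_eq_trans[OF g1 g2])
  qed
  have c4: "game_eq ?G (gplus (downm (b - a - 1)) star_g)" if "b \<ge> a + 2"
  proof -
    define k where "k = b - a - 2"
    have k: "b = a + k + 2" using that k_def by simp
    have e: "b - a - 1 = Suc k" using k by simp
    have "T b a = W (Suc k)" using k T_pos[of a "Suc k"] by simp
    then have "T a b = neg (W (Suc k))" using T_sym[of a b] by simp
    then have g1: "game_eq ?G (neg (W (Suc k)))" using main0 by simp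
    have "game_eq (neg (gplus (upm (Suc k)) star_g)) (neg (W (Suc k)))"
      by (rule game_eq_neg[OF upm_W])
    then have g2: "game_eq (neg (W (Suc k))) (gplus (downm (Suc k)) star_g)"
      by (simp add: neg_gplus neg_upm game_eq_sym)
    show ?thesis unfolding e by (rule game_eq_trans[OF g1 g2])
  qed
  show ?thesis using c1 c2 c3 c4 by blast
qed
end
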